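(* Let $d$ be a positive integer and let $K \le k \le d$ be non-negative integers. Let $\mathbf{b} \in \mathbb{R}^d$ be an arbitrary vector and let $\mathbf{a} \in \mathbb{R}^d$ be any $K$-sparse vector (i.e. $\mathbf{a}$ has at most $K$ non-zero entries). Define $$\rho = \frac{\min\{K, d-k\}}{k - K + \min\{K, d-k\}}, \qquad \nu = 1 + \frac{\rho + \sqrt{(4+\rho)\rho}}{2}.$$ Then $$\|\mathcal{H}_k(\mathbf{b}) - \mathbf{a}\|_2 \le \sqrt{\nu}\, \|\mathbf{b} - \mathbf{a}\|_2 .$$ Moreover, the bound is tight: there exist vectors $\mathbf{b}$ and $K$-sparse $\mathbf{a}$ for which equality holds.
   Context: For $\mathbf{v} \in \mathbb{R}^d$, the hard thresholding operator $\mathcal{H}_k(\mathbf{v})$ is the vector obtained from $\mathbf{v}$ by keeping its $k$ entries of largest absolute value and setting all other entries to zero (ties broken lexicographically). Thus $\mathcal{H}_k(\mathbf{v})$ is $k$-sparse. *)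

theory Defs
  imports Complex_Main
begin

text \<open>Vectors in R^d are represented as functions nat => real; only the
entries with index i < d matter.\<close>

definition l2norm :: "nat \<Rightarrow> (nat \<Rightarrow> real) \<Rightarrow> real" where
  "l2norm d v = sqrt (\<Sum>i<d. (v i)^2)"

definition is_sparse :: "nat \<Rightarrow> nat \<Rightarrow> (nat \<Rightarrow> real) \<Rightarrow> bool" where
  "is_sparse d K a \<longleftrightarrow> card {i. i < d \<and> a i \<noteq> 0} \<le> K"

definition hard_threshold :: "nat \<Rightarrow> nat \<Rightarrow> (nat \<Rightarrow> real) \<Rightarrow> (nat \<Rightarrow> real)" where
  "hard_threshold d k v = (\<lambda>i. if i < d \<and>
       card {j. j < d \<and> (\<bar>v j\<bar> > \<bar>v i\<bar> \<or> (\<bar>v j\<bar> = \<bar>v i\<bar> \<and> j < i))} < k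
     then v i else 0)"

definition ht_rho :: "nat \<Rightarrow> nat \<Rightarrow> nat \<Rightarrow> real" where
  "ht_rho d K k = real (min K (d - k)) / real (k - K + min K (d - k))"

definition ht_nu :: "nat \<Rightarrow> nat \<Rightarrow> nat \<Rightarrow> real" where
  "ht_nu d K k = 1 + (ht_rho d K k + sqrt ((4 + ht_rho d K k) * ht_rho d K k)) / 2"

end

theory Submission
  imports Defs
begin

definition prec :: "(nat \<Rightarrow> real) \<Rightarrow> nat \<Rightarrow> nat \<Rightarrow> bool" where
  "prec b j i \<longleftrightarrow> \<bar>b j\<bar> > \<bar>b i\<bar> \<or> (\<bar>b j\<bar> = \<bar>b i\<bar> \<and> j < i)"

definition rk :: "nat \<Rightarrow> (nat \<Rightarrow> real) \<Rightarrow> nat \<Rightarrow> nat" where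
  "rk d b i = card {j. j < d \<and> prec b j i}"

lemma ht_eq: "hard_threshold d k b i = (if i < d \<and> rk d b i < k then b i else 0)"
  by (simp add: hard_threshold_def rk_def prec_def)

lemma prec_trans: "prec b l j \<Longrightarrow> prec b j i \<Longrightarrow> prec b l i"
  unfolding prec_def by auto

lemma prec_irrefl: "\<not> prec b i i"
  unfolding prec_def by auto

lemma prec_total: "i \<noteq> j \<Longrightarrow> prec b j i \<or> prec b i j"
  unfolding prec_def by auto

lemma rk_less:
  assumes "j < d" "prec b j i"
  shows "rk d b j < rk d b i"
proof -
  have sub: "insert j {l. l < d \<and> prec b l j} \<subseteq> {l. l < d \<and> prec b l i}"
    using assms prec_trans by blast
  have "j \<notin> {l. l < d \<and> prec b l j}" using prec_irrefl by blast
  hence "card (insert j {l. l < d \<and> prec b l j}) = Suc (rk d b j)"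
    unfolding rk_def by simp
  moreover have "card (insert j {l. l < d \<and> prec b l j}) \<le> rk d b i"
    unfolding rk_def by (rule card_mono[OF _ sub]) simp
  ultimately show ?thesis by simp
qed

lemma rk_inj: "inj_on (rk d b) {..<d}"
proof (rule inj_onI)
  fix i j assume "i \<in> {..<d}" "j \<in> {..<d}" "rk d b i = rk d b j"
  thus "i = j" using prec_total[of i j b] rk_less[of j d b i] rk_less[of i d b j] by fastforce
qed

lemma rk_bound: "i < d \<Longrightarrow> rk d b i < d"
proof -
  assume "i < d"
  have "{j. j < d \<and> prec b j i} \<subseteq> {..<d} - {i}" using prec_irrefl by blast
  hence "rk d b i \<le> card ({..<d} - {i})" unfolding rk_def by (intro card_mono) auto
  thus ?thesis using \<open>i < d\<close> by simp
qed

lemma card_notS: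
  assumes "k \<le> d"
  shows "card {i. i < d \<and> \<not> rk d b i < k} \<le> d - k"
proof -
  have "card {i. i < d \<and> \<not> rk d b i < k} \<le> card {k..<d}"
  proof (rule card_inj_on_le)
    show "inj_on (rk d b) {i. i < d \<and> \<not> rk d b i < k}" using rk_inj by (rule inj_on_subset) auto
    show "rk d b ` {i. i < d \<and> \<not> rk d b i < k} \<subseteq> {k..<d}" using rk_bound by fastforce
  qed simp
  thus ?thesis by simp
qed

lemma card_S:
  assumes "k \<le> d"
  shows "k \<le> card {i. i < d \<and> rk d b i < k}"
proof -
  have "{..<d} = {i. i < d \<and> rk d b i < k} \<union> {i. i < d \<and> \<not> rk d b i < k}" by auto
  hence "card {..<d} = card ({i. i < d \<and> rk d b i < k} \<union> {i. i < d \<and> \<not> rk d b i < k})" by (rule arg_cong[where f=card])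
  also have "\<dots> = card {i. i < d \<and> rk d b i < k} + card {i. i < d \<and> \<not> rk d b i < k}"
    by (rule card_Un_disjoint) auto
  finally have "d = card {i. i < d \<and> rk d b i < k} + card {i. i < d \<and> \<not> rk d b i < k}" by simp
  thus ?thesis using card_notS[OF assms, of b] assms by linarith
qed

lemma S_dom:
  assumes "i < d" "rk d b i < k" "j < d" "\<not> rk d b j < k"
  shows "(b j)^2 \<le> (b i)^2"
proof (rule ccontr)
  assume "\<not> ?thesis"
  hence "\<bar>b j\<bar> > \<bar>b i\<bar>" by (metis abs_le_square_iff not_le)
  hence "prec b j i" unfolding prec_def by simp
  hence "rk d b j < rk d b i" using rk_less assms by blast
  thus False using assms by simp
qed

lemma scalar_ineq:
  fixes r x a b :: real
  assumes "r > 0" "x > 0" "x^2 = r*x + r"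
  shows "r * a^2 \<le> r*(1+x)*(b-a)^2 + x*b^2"
proof -
  have eq: "r*x*((r*(1+x)*(b-a)^2 + x*b^2) - r * a^2) - (r*x*a - r*(1+x)*b)^2
       = r*b^2*(x^2 - r*x - r)"
    by (simp add: algebra_simps power2_eq_square)
  hence "r*x*((r*(1+x)*(b-a)^2 + x*b^2) - r * a^2) = (r*x*a - r*(1+x)*b)^2"
    using assms(3) by simp
  hence "r*x*((r*(1+x)*(b-a)^2 + x*b^2) - r * a^2) \<ge> 0" by simp
  moreover have "r*x > 0" using assms by simp
  ultimately have "(r*(1+x)*(b-a)^2 + x*b^2) - r * a^2 \<ge> 0"
    by (simp add: zero_le_mult_iff)
  thus ?thesis by simp
qed

lemma x_props:
  fixes r :: real
  assumes "r > 0"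
  defines "x \<equiv> (r + sqrt ((4 + r) * r)) / 2"
  shows "x > 0" "x^2 = r*x + r"
proof -
  have h0: "(4+r)*r \<ge> 0" using assms by (intro mult_nonneg_nonneg) auto
  hence s: "(sqrt ((4 + r) * r))^2 = (4+r)*r" by (rule real_sqrt_pow2)
  have sq0: "sqrt ((4 + r) * r) \<ge> 0" using h0 by simp
  show "x > 0" unfolding x_def using add_pos_nonneg[OF assms(1) sq0] by simp
  show "x^2 = r*x + r" unfolding x_def using s by (simp add: power2_eq_square algebra_simps)
qed

lemma main_sq:
  fixes d K k :: nat and a b :: "nat \<Rightarrow> real"
  assumes "K \<le> k" "k \<le> d" and sp: "is_sparse d K a"
  shows "(\<Sum>i<d. (hard_threshold d k b i - a i)^2) \<le> ht_nu d K k * (\<Sum>i<d. (b i - a i)^2)"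
proof -
  define S where "S = {i. i < d \<and> rk d b i < k}"
  define N where "N = {i. i < d \<and> \<not> rk d b i < k}"
  define T where "T = {i. i < d \<and> a i \<noteq> 0}"
  define U where "U = N \<inter> T"
  define A where "A = (\<Sum>i\<in>S. (b i - a i)^2)"
  define P where "P = (\<Sum>i\<in>U. (a i)^2)"
  define Q where "Q = (\<Sum>i\<in>U. (b i - a i)^2)"
  define B where "B = (\<Sum>i\<in>U. (b i)^2)"
  define L where "L = (\<Sum>i<d. (hard_threshold d k b i - a i)^2)"
  define R where "R = (\<Sum>i<d. (b i - a i)^2)"
  define \<rho> where "\<rho> = ht_rho d K k"
  define x where "x = (\<rho> + sqrt ((4 + \<rho>) * \<rho>)) / 2"
  have nu: "ht_nu d K k = 1 + x" unfolding ht_nu_def x_def \<rho>_def by simp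
  have fS: "finite S" and fN: "finite N" and fT: "finite T" and fU: "finite U"
    unfolding S_def N_def T_def U_def by auto
  have disj: "S \<inter> N = {}" unfolding S_def N_def by auto
  have un: "{..<d} = S \<union> N" unfolding S_def N_def by auto
  have L_eq: "L = A + (\<Sum>i\<in>N. (a i)^2)"
  proof -
    have "L = (\<Sum>i\<in>S. (hard_threshold d k b i - a i)^2) + (\<Sum>i\<in>N. (hard_threshold d k b i - a i)^2)"
      unfolding L_def un using fS fN disj by (simp add: sum.union_disjoint)
    also have "(\<Sum>i\<in>S. (hard_threshold d k b i - a i)^2) = A"
      unfolding A_def by (rule sum.cong) (auto simp: ht_eq S_def)
    also have "(\<Sum>i\<in>N. (hard_threshold d k b i - a i)^2) = (\<Sum>i\<in>N. (a i)^2)"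
      by (rule sum.cong) (auto simp: ht_eq N_def)
    finally show ?thesis .
  qed
  have NU: "(\<Sum>i\<in>N. (a i)^2) = P"
    unfolding P_def by (rule sum.mono_neutral_right) (auto simp: U_def T_def N_def fN)
  have L2: "L = A + P" using L_eq NU by simp
  have R_eq: "R = A + (\<Sum>i\<in>N. (b i - a i)^2)"
    unfolding R_def un A_def using fS fN disj by (simp add: sum.union_disjoint)
  have "Q \<le> (\<Sum>i\<in>N. (b i - a i)^2)"
    unfolding Q_def by (rule sum_mono2) (auto simp: fN U_def)
  hence RAQ: "A + Q \<le> R" using R_eq by simp
  have A0: "A \<ge> 0" unfolding A_def by (simp add: sum_nonneg)
  have Q0: "Q \<ge> 0" unfolding Q_def by (simp add: sum_nonneg)
  show ?thesis
  proof (cases "U = {}")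
    case True
    hence "L = A" using L2 P_def by simp
    moreover have "x \<ge> 0"
    proof -
      have "\<rho> \<ge> 0" unfolding \<rho>_def ht_rho_def by simp
      thus ?thesis unfolding x_def by simp
    qed
    moreover have "x * R \<ge> 0" using RAQ Q0 A0 \<open>x \<ge> 0\<close> by simp
    ultimately show ?thesis
      using RAQ Q0 nu unfolding L_def[symmetric] R_def[symmetric] by (simp add: algebra_simps)
  next
    case False
    define m where "m = card U"
    have m1: "m \<ge> 1" using False fU unfolding m_def by (simp add: Suc_le_eq card_gt_0_iff)
    have cT: "card T \<le> K" using sp unfolding is_sparse_def T_def .
    have mK: "m \<le> K" unfolding m_def using card_mono[OF fT, of U] cT by (auto simp: U_def)
    have mN: "m \<le> d - k" unfolding m_def using card_mono[OF fN, of U] card_notS[OF assms(2), of b]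
      by (auto simp: U_def N_def)
    define M where "M = min K (d - k)"
    have mM: "m \<le> M" using mK mN unfolding M_def by simp
    have rho_eq: "\<rho> = real M / (real k - real K + real M)"
      unfolding \<rho>_def ht_rho_def M_def using assms(1) by (simp add: of_nat_diff)
    have kKM: "real k - real K + real M > 0" using mM m1 assms(1) by simp
    have rpos: "\<rho> > 0" using rho_eq kKM mM m1 by simp
    have xpos: "x > 0" and xeq: "x^2 = \<rho>*x + \<rho>" using x_props[OF rpos] unfolding x_def by auto
    define \<beta> where "\<beta> = Max ((\<lambda>j. (b j)^2) ` U)"
    have bU: "\<And>j. j \<in> U \<Longrightarrow> (b j)^2 \<le> \<beta>" unfolding \<beta>_def using fU by simp
    have "\<beta> \<in> (\<lambda>j. (b j)^2) ` U" unfolding \<beta>_def using fU False by (intro Max_in) auto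
    then obtain j0 where j0: "j0 \<in> U" "(b j0)^2 = \<beta>" by auto
    have beta0: "\<beta> \<ge> 0" using j0 by (metis zero_le_power2)
    have B_le: "B \<le> real m * \<beta>"
      unfolding B_def m_def using sum_bounded_above[of U "\<lambda>j. (b j)^2" \<beta>] bU by simp
    have cardS: "k \<le> card S" unfolding S_def using card_S[OF assms(2)] .
    have c1: "card S = card (S - T) + card (S \<inter> T)"
    proof -
      have "S = (S - T) \<union> (S \<inter> T)" by auto
      hence "card S = card ((S - T) \<union> (S \<inter> T))" by (rule arg_cong[where f=card])
      also have "\<dots> = card (S - T) + card (S \<inter> T)" using fS by (intro card_Un_disjoint) auto
      finally show ?thesis .
    qed
    have "card (S \<inter> T) + card U = card ((S \<inter> T) \<union> U)"
      using fS fU disj by (intro card_Un_disjoint[symmetric]) (auto simp: U_def)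
    also have "\<dots> \<le> card T" using fT by (intro card_mono) (auto simp: U_def)
    finally have c2: "card (S \<inter> T) + m \<le> K" using cT unfolding m_def by simp
    have cST: "real k - real K + real m \<le> real (card (S - T))"
      using c1 c2 cardS by linarith
    have SdomU: "\<And>i. i \<in> S \<Longrightarrow> \<beta> \<le> (b i)^2"
      using j0 S_dom unfolding S_def U_def N_def by (metis (mono_tags, lifting) IntE mem_Collect_eq)
    have "real (card (S - T)) * \<beta> \<le> (\<Sum>i\<in>S - T. (b i)^2)"
      using sum_bounded_below[of "S - T" \<beta> "\<lambda>i. (b i)^2"] SdomU by simp
    also have "\<dots> = (\<Sum>i\<in>S - T. (b i - a i)^2)"
      by (rule sum.cong) (auto simp: S_def T_def)
    also have "\<dots> \<le> A" unfolding A_def using fS by (intro sum_mono2) auto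
    finally have cb: "real (card (S - T)) * \<beta> \<le> A" .
    have rk: "real m \<le> \<rho> * (real k - real K + real m)"
    proof -
      have "real M * (real k - real K + real m) \<ge> real m * (real k - real K + real M)"
      proof -
        have "real M * (real k - real K + real m) - real m * (real k - real K + real M)
              = (real M - real m) * (real k - real K)" by (simp add: algebra_simps)
        moreover have "(real M - real m) * (real k - real K) \<ge> 0" using mM assms(1) by simp
        ultimately show ?thesis by simp
      qed
      thus ?thesis unfolding rho_eq using kKM by (simp add: field_simps)
    qed
    have "B \<le> \<rho> * A"
    proof -
      have "B \<le> real m * \<beta>" by (rule B_le)
      also have "\<dots> \<le> \<rho> * (real k - real K + real m) * \<beta>" using rk beta0 by (simp add: mult_right_mono)
      also have "\<dots> \<le> \<rho> * real (card (S - T)) * \<beta>"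
        using cST rpos beta0 by (simp add: mult_left_mono mult_right_mono)
      also have "\<dots> \<le> \<rho> * A" using cb rpos by (simp add: mult.assoc mult_left_mono)
      finally show ?thesis .
    qed
    moreover have "\<rho> * P \<le> \<rho> * (1 + x) * Q + x * B"
    proof -
      have "\<rho> * P = (\<Sum>i\<in>U. \<rho> * (a i)^2)" unfolding P_def by (simp add: sum_distrib_left)
      also have "\<dots> \<le> (\<Sum>i\<in>U. \<rho> * (1 + x) * (b i - a i)^2 + x * (b i)^2)"
        by (rule sum_mono) (rule scalar_ineq[OF rpos xpos xeq])
      also have "\<dots> = \<rho> * (1 + x) * Q + x * B"
        unfolding Q_def B_def by (simp add: sum.distrib sum_distrib_left)
      finally show ?thesis .
    qed
    ultimately have "\<rho> * L \<le> \<rho> * ((1 + x) * R)"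
    proof -
      assume h1: "B \<le> \<rho> * A" and h2: "\<rho> * P \<le> \<rho> * (1 + x) * Q + x * B"
      have "x * B \<le> x * (\<rho> * A)" using h1 xpos by (simp add: mult_left_mono)
      hence "\<rho> * L \<le> \<rho> * (1 + x) * (A + Q)" using h2 L2 by (simp add: algebra_simps)
      also have "\<dots> \<le> \<rho> * (1 + x) * R" using RAQ rpos xpos by (simp add: mult_left_mono)
      finally show ?thesis by (simp add: mult.assoc)
    qed
    hence "L \<le> (1 + x) * R" using rpos by simp
    thus ?thesis unfolding L_def R_def nu .
  qed
qed

lemma sum_ind:
  fixes c :: real and d :: nat
  assumes "I \<subseteq> {..<d}"
  shows "(\<Sum>i<d. if i \<in> I then c else 0) = c * real (card I)"
proof -
  have "(\<Sum>i<d. if i \<in> I then c else 0) = (\<Sum>i\<in>{..<d} \<inter> I. c)"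
    using sum.inter_restrict[of "{..<d}" "\<lambda>i. c" I] by simp
  also have "{..<d} \<inter> I = I" using assms by auto
  finally show ?thesis by simp
qed

lemma tight_zero:
  fixes d K k :: nat
  assumes "0 < d" "0 < k" "min K (d - k) = 0"
  shows "\<exists>a b. is_sparse d K a \<and> (\<exists>i<d. b i \<noteq> a i) \<and>
            l2norm d (\<lambda>i. hard_threshold d k b i - a i)
              = sqrt (ht_nu d K k) * l2norm d (\<lambda>i. b i - a i)"
proof -
  define b :: "nat \<Rightarrow> real" where "b = (\<lambda>i. if i = 0 then 1 else 0)"
  have nu: "ht_nu d K k = 1" unfolding ht_nu_def ht_rho_def using assms(3) by simp
  have H: "hard_threshold d k b i = b i" if "i < d" for i
  proof (cases "i = 0")
    case True
    have E: "{j. j < d \<and> (\<bar>b j\<bar> > \<bar>b 0\<bar> \<or> (\<bar>b j\<bar> = \<bar>b 0\<bar> \<and> j < 0))} = {}"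
      unfolding b_def by auto
    have E2: "{j. j < d \<and> \<bar>b 0\<bar> < \<bar>b j\<bar>} = {}" unfolding b_def by auto
    have "hard_threshold d k b 0 = b 0" unfolding hard_threshold_def E using assms(1,2) by simp
    thus ?thesis using True by simp
  next
    case False
    thus ?thesis unfolding hard_threshold_def b_def by simp
  qed
  have "is_sparse d K (\<lambda>i. 0)" unfolding is_sparse_def by simp
  moreover have "b 0 \<noteq> 0" unfolding b_def by simp
  moreover have "l2norm d (\<lambda>i. hard_threshold d k b i - 0)
              = sqrt (ht_nu d K k) * l2norm d (\<lambda>i. b i - 0)"
    unfolding nu l2norm_def using H by simp
  ultimately show ?thesis using assms(1) by blast
qed

lemma tight_pos:
  fixes d K k :: nat
  assumes "K \<le> k" "k \<le> d" "0 < min K (d - k)"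
  shows "\<exists>a b. is_sparse d K a \<and> (\<exists>i<d. b i \<noteq> a i) \<and>
            l2norm d (\<lambda>i. hard_threshold d k b i - a i)
              = sqrt (ht_nu d K k) * l2norm d (\<lambda>i. b i - a i)"
proof -
  define M where "M = min K (d - k)"
  have M0: "0 < M" "M \<le> K" "k + M \<le> d" using assms unfolding M_def by auto
  define N where "N = real k - real K + real M"
  have N0: "N > 0" unfolding N_def using M0 assms(1) by simp
  define \<rho> where "\<rho> = ht_rho d K k"
  have rho_eq: "\<rho> = real M / N"
    unfolding \<rho>_def ht_rho_def M_def N_def using assms(1) by (simp add: of_nat_diff)
  have rpos: "\<rho> > 0" using rho_eq N0 M0 by simp
  have MN: "real M = \<rho> * N" using rho_eq N0 by simp
  define x where "x = (\<rho> + sqrt ((4 + \<rho>) * \<rho>)) / 2"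
  have xpos: "x > 0" and xeq: "x^2 = \<rho>*x + \<rho>" using x_props[OF rpos] unfolding x_def by auto
  have nu: "ht_nu d K k = 1 + x" unfolding ht_nu_def x_def \<rho>_def by simp
  define \<alpha> where "\<alpha> = (1 + x) / x"
  define a :: "nat \<Rightarrow> real" where
    "a = (\<lambda>i. if i < K - M then 1 else if k \<le> i \<and> i < k + M then \<alpha> else 0)"
  define b :: "nat \<Rightarrow> real" where "b = (\<lambda>i. if i < k + M then 1 else 0)"
  have rkb: "rk d b i = i" if "i < k + M" for i
  proof -
    have "{j. j < d \<and> prec b j i} = {..<i}"
      using that M0(3) unfolding prec_def b_def by auto
    thus ?thesis unfolding rk_def by simp
  qed
  have H: "hard_threshold d k b i = (if i < k then 1 else 0)" if "i < d" for i
    using that rkb[of i] M0 unfolding ht_eq by (auto simp: b_def)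
  have sp: "is_sparse d K a"
  proof -
    have "{i. i < d \<and> a i \<noteq> 0} \<subseteq> {..<K - M} \<union> {k..<k + M}" unfolding a_def by auto
    hence "card {i. i < d \<and> a i \<noteq> 0} \<le> card ({..<K - M} \<union> {k..<k + M})"
      by (intro card_mono) auto
    also have "\<dots> \<le> card {..<K - M} + card {k..<k + M}" by (rule card_Un_le)
    finally show ?thesis unfolding is_sparse_def using M0 by simp
  qed
  have wit: "K - M < d \<and> b (K - M) \<noteq> a (K - M)"
    using M0 assms unfolding a_def b_def by auto
  have e1: "(hard_threshold d k b i - a i)^2 =
       (if i \<in> {K - M..<k} then 1 else 0) + (if i \<in> {k..<k+M} then \<alpha>^2 else 0)" if "i < d" for i
    using that M0 assms(1) unfolding H[OF that] a_def by auto
  have e2: "(b i - a i)^2 =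
       (if i \<in> {K - M..<k} then 1 else 0) + (if i \<in> {k..<k+M} then (1 - \<alpha>)^2 else 0)" if "i < d" for i
    using that M0 assms(1) unfolding a_def b_def by auto
  have cI: "real (card {K - M..<k}) = N" unfolding N_def using M0 assms(1) by (simp add: of_nat_diff)
  have sub1: "{K - M..<k} \<subseteq> {..<d}" using assms by auto
  have sub2: "{k..<k + M} \<subseteq> {..<d}" using M0 by auto
  have S1: "(\<Sum>i<d. (hard_threshold d k b i - a i)^2) = N + real M * \<alpha>^2"
  proof -
    have "(\<Sum>i<d. (hard_threshold d k b i - a i)^2) =
        (\<Sum>i<d. (if i \<in> {K - M..<k} then 1 else 0) + (if i \<in> {k..<k+M} then \<alpha>^2 else 0))"
      by (rule sum.cong) (simp_all add: e1)
    also have "\<dots> = N + real M * \<alpha>^2"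
      unfolding sum.distrib sum_ind[OF sub1] sum_ind[OF sub2] cI by simp
    finally show ?thesis .
  qed
  have S2: "(\<Sum>i<d. (b i - a i)^2) = N + real M * (1 - \<alpha>)^2"
  proof -
    have "(\<Sum>i<d. (b i - a i)^2) =
        (\<Sum>i<d. (if i \<in> {K - M..<k} then 1 else 0) + (if i \<in> {k..<k+M} then (1 - \<alpha>)^2 else 0))"
      by (rule sum.cong) (simp_all add: e2)
    also have "\<dots> = N + real M * (1 - \<alpha>)^2"
      unfolding sum.distrib sum_ind[OF sub1] sum_ind[OF sub2] cI by simp
    finally show ?thesis .
  qed
  have a1: "\<alpha>^2 - (1 + x) * (1 - \<alpha>)^2 = (1 + x) / x"
    unfolding \<alpha>_def using xpos by (simp add: field_simps power2_eq_square)
  have a2: "\<rho> * ((1 + x) / x) = x"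
    using xeq xpos by (simp add: field_simps power2_eq_square)
  have key: "N + real M * \<alpha>^2 = (1 + x) * (N + real M * (1 - \<alpha>)^2)"
  proof -
    have "N + real M * \<alpha>^2 - (1 + x) * (N + real M * (1 - \<alpha>)^2)
        = - x * N + real M * (\<alpha>^2 - (1 + x) * (1 - \<alpha>)^2)" by (simp add: algebra_simps)
    also have "\<dots> = - x * N + N * (\<rho> * ((1 + x) / x))" unfolding a1 MN by simp
    also have "\<dots> = 0" unfolding a2 by simp
    finally show ?thesis by simp
  qed
  have "l2norm d (\<lambda>i. hard_threshold d k b i - a i) = sqrt (ht_nu d K k) * l2norm d (\<lambda>i. b i - a i)"
    unfolding l2norm_def S1 S2 nu key by (simp add: real_sqrt_mult)
  thus ?thesis using sp wit by blast
qed

theorem theorem1: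
  fixes d K k :: nat
  assumes "0 < d" and "K \<le> k" and "k \<le> d"
  shows "(\<forall>a b. is_sparse d K a \<longrightarrow>
            l2norm d (\<lambda>i. hard_threshold d k b i - a i)
              \<le> sqrt (ht_nu d K k) * l2norm d (\<lambda>i. b i - a i))
       \<and> (0 < k \<longrightarrow> (\<exists>a b. is_sparse d K a \<and> (\<exists>i<d. b i \<noteq> a i) \<and>
            l2norm d (\<lambda>i. hard_threshold d k b i - a i)
              = sqrt (ht_nu d K k) * l2norm d (\<lambda>i. b i - a i)))"
proof (intro conjI allI impI)
  fix a b :: "nat \<Rightarrow> real"
  assume sp: "is_sparse d K a"
  have "sqrt (\<Sum>i<d. (hard_threshold d k b i - a i)^2) \<le> sqrt (ht_nu d K k * (\<Sum>i<d. (b i - a i)^2))"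
    using main_sq[OF assms(2,3) sp] by simp
  thus "l2norm d (\<lambda>i. hard_threshold d k b i - a i) \<le> sqrt (ht_nu d K k) * l2norm d (\<lambda>i. b i - a i)"
    unfolding l2norm_def by (simp add: real_sqrt_mult)
next
  assume "0 < k"
  show "\<exists>a b. is_sparse d K a \<and> (\<exists>i<d. b i \<noteq> a i) \<and>
            l2norm d (\<lambda>i. hard_threshold d k b i - a i)
              = sqrt (ht_nu d K k) * l2norm d (\<lambda>i. b i - a i)"
  proof (cases "min K (d - k) = 0")
    case True
    thus ?thesis using tight_zero assms \<open>0 < k\<close> by blast
  next
    case False
    thus ?thesis using tight_pos assms by simp
  qed
qed

end
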